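(* Fix a positive integer $k$ and a permutation $\rho$. Then $\lim_{n\to\infty}\left(\operatorname{op}_{n,k}(\rho)\right)^{1/n}$ exists and is a real number in $[1,\infty)$.
   Context: An ordered set partition of $[n]$ into $k$ blocks is a sequence $B_1/B_2/\cdots/B_k$ of nonempty, pairwise disjoint subsets of $[n]$ whose union is $[n]$; the order of the blocks matters, but not the order of elements within a block. For a permutation $\rho=\rho_1\cdots\rho_m\in\mathcal{S}_m$, an ordered partition $B_1/\cdots/B_k$ contains $\rho$ if there are block indices $i_1<i_2<\cdots<i_m$ and elements $b_j\in B_{i_j}$ such that $b_1\cdots b_m$ is order-isomorphic to $\rho$ (i.e. $b_a<b_c$ iff $\rho_a<\rho_c$); otherwise it avoids $\rho$. $\operatorname{op}_{n,k}(\rho)$ denotes the number of $\rho$-avoiding ordered partitions of $[n]$ into $k$ blocks. *)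

theory Defs
  imports Complex_Main
begin

definition is_perm :: "nat list \<Rightarrow> bool" where
  "is_perm rho \<longleftrightarrow> distinct rho \<and> set rho = {1..length rho}"

definition ordered_partitions :: "nat \<Rightarrow> nat \<Rightarrow> nat set list set" where
  "ordered_partitions n k =
     {Bs. length Bs = k \<and> (\<forall>B\<in>set Bs. B \<noteq> {}) \<and>
          (\<forall>i<k. \<forall>j<k. i \<noteq> j \<longrightarrow> Bs ! i \<inter> Bs ! j = {}) \<and>
          \<Union>(set Bs) = {1..n}}"

definition op_contains :: "nat set list \<Rightarrow> nat list \<Rightarrow> bool" where
  "op_contains Bs rho \<longleftrightarrow>
     (\<exists>idx bs. length idx = length rho \<and> length bs = length rho \<and>
        sorted_wrt (<) idx \<and>
        (\<forall>j<length rho. idx ! j < length Bs \<and> bs ! j \<in> Bs ! (idx ! j)) \<and>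
        (\<forall>a<length rho. \<forall>c<length rho. bs ! a < bs ! c \<longleftrightarrow> rho ! a < rho ! c))"

definition op_count :: "nat \<Rightarrow> nat \<Rightarrow> nat list \<Rightarrow> nat" where
  "op_count n k rho = card {Bs \<in> ordered_partitions n k. \<not> op_contains Bs rho}"

end

theory Submission
  imports Defs
begin

definition iso :: "nat list \<Rightarrow> nat list \<Rightarrow> bool" where
  "iso bs rho \<longleftrightarrow> length bs = length rho \<and>
     (\<forall>a<length rho. \<forall>c<length rho. bs ! a < bs ! c \<longleftrightarrow> rho ! a < rho ! c)"

fun emb :: "nat list \<Rightarrow> nat set list \<Rightarrow> bool" where
  "emb [] Bs = True"
| "emb (b#bs) [] = False"
| "emb (b#bs) (B#Bs) = ((b \<in> B \<and> emb bs Bs) \<or> emb (b#bs) Bs)"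

lemma emb_idx:
  "emb bs Bs \<Longrightarrow> \<exists>idx. length idx = length bs \<and> sorted_wrt (<) idx \<and>
     (\<forall>j<length bs. idx ! j < length Bs \<and> bs ! j \<in> Bs ! (idx ! j))"
proof (induction bs Bs rule: emb.induct)
  case (1 Bs)
  then show ?case by auto
next
  case (2 b bs)
  then show ?case by auto
next
  case (3 b bs B Bs)
  show ?case
  proof (cases "b \<in> B \<and> emb bs Bs")
    case True
    then obtain idx where i: "length idx = length bs" "sorted_wrt (<) idx"
      "\<forall>j<length bs. idx ! j < length Bs \<and> bs ! j \<in> Bs ! (idx ! j)" using 3(1) by blast
    show ?thesis
      apply (rule exI[of _ "0 # map Suc idx"])
      using i True by (auto simp: sorted_wrt_map nth_Cons split: nat.splits)
  next
    case False
    then have "emb (b#bs) Bs" using 3(3) by auto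
    then obtain idx where i: "length idx = length (b#bs)" "sorted_wrt (<) idx"
      "\<forall>j<length (b#bs). idx ! j < length Bs \<and> (b#bs) ! j \<in> Bs ! (idx ! j)" using 3(2) False by blast
    show ?thesis
      apply (rule exI[of _ "map Suc idx"])
      using i by (auto simp: sorted_wrt_map)
  qed
qed

lemma map_Suc_ex: "\<forall>x\<in>set xs. (0::nat) < x \<Longrightarrow> \<exists>ys. xs = map Suc ys"
  by (rule exI[of _ "map (\<lambda>x. x - 1) xs"]) (induction xs; auto)

lemma idx_emb:
  "length idx = length bs \<Longrightarrow> sorted_wrt (<) idx \<Longrightarrow>
     (\<forall>j<length bs. idx ! j < length Bs \<and> bs ! j \<in> Bs ! (idx ! j)) \<Longrightarrow> emb bs Bs"
proof (induction Bs arbitrary: bs idx)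
  case Nil
  then show ?case by (cases bs) auto
next
  case (Cons B Bs)
  show ?case
  proof (cases bs)
    case Nil
    then show ?thesis by simp
  next
    case (Cons b bs')
    with Cons.prems obtain i idx' where idx: "idx = i # idx'" by (cases idx) auto
    have pos: "\<forall>x\<in>set idx'. 0 < x" using Cons.prems(2) idx by auto
    then obtain idx0 where idx0: "idx' = map Suc idx0" using map_Suc_ex by blast
    show ?thesis
    proof (cases "i = 0")
      case True
      have "emb bs' Bs"
        apply (rule Cons.IH[of idx0])
        using Cons.prems idx idx0 True \<open>bs = b # bs'\<close>
          apply (auto simp: sorted_wrt_map)
        done
      moreover have "b \<in> B" using Cons.prems idx True \<open>bs = b # bs'\<close> by (drule_tac x=0 in spec) auto
      ultimately show ?thesis using \<open>bs = b # bs'\<close> by simp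
    next
      case False
      then obtain i0 where "i = Suc i0" using not0_implies_Suc by blast
      have "emb bs Bs"
        apply (rule Cons.IH[of "i0 # idx0"])
        using Cons.prems idx idx0 \<open>i = Suc i0\<close>
          apply (auto simp: sorted_wrt_map)
        subgoal for j by (drule spec[of _ j]) (cases j; auto)
        subgoal for j by (drule spec[of _ j]) (cases j; auto)
        done
      then show ?thesis using \<open>bs = b # bs'\<close> by simp
    qed
  qed
qed

lemma op_contains_emb: "op_contains Bs rho \<longleftrightarrow> (\<exists>bs. iso bs rho \<and> emb bs Bs)"
proof
  assume "op_contains Bs rho"
  then obtain idx bs where "length idx = length rho" "length bs = length rho"
        "sorted_wrt (<) idx"
        "\<forall>j<length rho. idx ! j < length Bs \<and> bs ! j \<in> Bs ! (idx ! j)"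
        "\<forall>a<length rho. \<forall>c<length rho. bs ! a < bs ! c \<longleftrightarrow> rho ! a < rho ! c"
    unfolding op_contains_def by blast
  then show "\<exists>bs. iso bs rho \<and> emb bs Bs" unfolding iso_def
    using idx_emb[of idx bs Bs] by auto
next
  assume "\<exists>bs. iso bs rho \<and> emb bs Bs"
  then obtain bs where b: "iso bs rho" "emb bs Bs" by blast
  then obtain idx where "length idx = length bs" "sorted_wrt (<) idx"
     "\<forall>j<length bs. idx ! j < length Bs \<and> bs ! j \<in> Bs ! (idx ! j)"
    using emb_idx by blast
  then show "op_contains Bs rho" unfolding op_contains_def using b(1) unfolding iso_def
    by (intro exI[of _ idx] exI[of _ bs]) auto
qed

lemma emb_mono: "list_all2 (\<subseteq>) Cs Bs \<Longrightarrow> emb bs Cs \<Longrightarrow> emb bs Bs"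
proof (induction Cs arbitrary: Bs bs)
  case Nil then show ?case by (cases bs) auto
next
  case (Cons C Cs)
  then obtain B Bs' where Bs: "Bs = B # Bs'" "C \<subseteq> B" "list_all2 (\<subseteq>) Cs Bs'"
    by (cases Bs) auto
  show ?case using Cons Bs by (cases bs) auto
qed

lemma emb_set: "emb bs Bs \<Longrightarrow> set bs \<subseteq> \<Union>(set Bs)"
  by (induction bs Bs rule: emb.induct) auto

lemma emb_inter: "emb bs Cs \<Longrightarrow> set bs \<subseteq> A \<Longrightarrow> emb bs (map (\<lambda>C. C \<inter> A) Cs)"
  by (induction bs Cs rule: emb.induct) auto

lemma emb_image: "emb bs (map (image f) Bs) \<Longrightarrow> \<exists>bs'. bs = map f bs' \<and> emb bs' Bs"
proof (induction Bs arbitrary: bs)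
  case Nil then show ?case by (cases bs) auto
next
  case (Cons B Bs)
  show ?case
  proof (cases bs)
    case Nil then show ?thesis by auto
  next
    case (Cons b bs1)
    show ?thesis
    proof (cases "b \<in> f ` B \<and> emb bs1 (map (image f) Bs)")
      case True
      then obtain b' bs' where "b' \<in> B" "b = f b'" "bs1 = map f bs'" "emb bs' Bs"
        using Cons.IH by blast
      then show ?thesis using Cons by (intro exI[of _ "b' # bs'"]) auto
    next
      case False
      then have "emb bs (map (image f) Bs)" using Cons.prems Cons by auto
      then obtain bs' where "bs = map f bs'" "emb bs' Bs" using Cons.IH by blast
      then show ?thesis by (intro exI[of _ bs']) (cases bs'; auto)
    qed
  qed
qed

lemma emb_filter: "emb bs (filter P Bs) \<Longrightarrow> emb bs Bs"
proof (induction Bs arbitrary: bs)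
  case Nil then show ?case by simp
next
  case (Cons B Bs)
  then show ?case by (cases bs) (auto split: if_splits)
qed

lemma emb_snoc: "emb bs (Cs @ [C]) \<Longrightarrow> emb bs Cs \<or> (\<exists>bs' b. bs = bs' @ [b] \<and> b \<in> C \<and> emb bs' Cs)"
proof (induction Cs arbitrary: bs)
  case Nil
  then show ?case by (cases bs) (auto elim: emb.elims)
next
  case (Cons D Cs)
  show ?case
  proof (cases bs)
    case Nil then show ?thesis by simp
  next
    case (Cons b bs1)
    show ?thesis
    proof (cases "b \<in> D \<and> emb bs1 (Cs @ [C])")
      case True
      then have "emb bs1 Cs \<or> (\<exists>bs' b. bs1 = bs' @ [b] \<and> b \<in> C \<and> emb bs' Cs)" using Cons.IH by blast
      then show ?thesis
      proof
        assume "emb bs1 Cs" then show ?thesis using True Cons by auto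
      next
        assume "\<exists>bs' b. bs1 = bs' @ [b] \<and> b \<in> C \<and> emb bs' Cs"
        then obtain bs' c where "bs1 = bs' @ [c]" "c \<in> C" "emb bs' Cs" by blast
        then show ?thesis using True Cons by (intro disjI2 exI[of _ "b # bs'"] exI[of _ c]) auto
      qed
    next
      case False
      then have "emb bs (Cs @ [C])" using Cons.prems Cons by auto
      then have "emb bs Cs \<or> (\<exists>bs' b. bs = bs' @ [b] \<and> b \<in> C \<and> emb bs' Cs)" using Cons.IH by blast
      then show ?thesis
      proof
        assume "emb bs Cs" then show ?thesis using Cons by auto
      next
        assume "\<exists>bs' b. bs = bs' @ [b] \<and> b \<in> C \<and> emb bs' Cs"
        then obtain bs' c where h: "bs = bs' @ [c]" "c \<in> C" "emb bs' Cs" by blast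
        then have "emb bs' (D # Cs)" by (cases bs') auto
        then show ?thesis using h by blast
      qed
    qed
  qed
qed

lemma emb_replicate_empty: "emb (b # bs) (replicate j {}) = False"
  by (induction j) auto

lemma iso_map:
  assumes "strict_mono_on A f" "set bs \<subseteq> A"
  shows "iso (map f bs) rho \<longleftrightarrow> iso bs rho"
proof -
  have "\<And>a c. a < length bs \<Longrightarrow> c < length bs \<Longrightarrow> f (bs ! a) < f (bs ! c) \<longleftrightarrow> bs ! a < bs ! c"
    using assms by (meson nth_mem strict_mono_on_less subsetD)
  then show ?thesis unfolding iso_def by auto
qed

lemma iso_first:
  assumes "is_perm rho" "iso bs rho" "length rho \<ge> 1"
    and "\<forall>c<length rho. c \<noteq> 0 \<longrightarrow> bs ! 0 < bs ! c"
  shows "rho ! 0 = 1"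
proof -
  have "1 \<in> set rho" using assms(1,3) unfolding is_perm_def by auto
  then obtain c where c: "c < length rho" "rho ! c = 1" by (metis in_set_conv_nth)
  show ?thesis
  proof (rule ccontr)
    assume ne: "rho ! 0 \<noteq> 1"
    then have "c \<noteq> 0" using c by metis
    then have "bs ! 0 < bs ! c" using assms(4) c by blast
    moreover have "0 < length rho" using assms(3) by linarith
    ultimately have "rho ! 0 < rho ! c" using assms(2) c unfolding iso_def by blast
    moreover have "rho ! 0 \<in> {1..length rho}" using assms(1,3) unfolding is_perm_def
      by (metis le_trans nth_mem not_one_le_zero less_one linorder_not_less)
    ultimately show False using c by auto
  qed
qed

lemma iso_last:
  assumes "is_perm rho" "iso bs rho" "length rho \<ge> 1"
    and "\<forall>c<length rho. c \<noteq> length rho - 1 \<longrightarrow> bs ! (length rho - 1) < bs ! c"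
  shows "rho ! (length rho - 1) = 1"
proof -
  have "1 \<in> set rho" using assms(1,3) unfolding is_perm_def by auto
  then obtain c where c: "c < length rho" "rho ! c = 1" by (metis in_set_conv_nth)
  show ?thesis
  proof (rule ccontr)
    assume ne: "rho ! (length rho - 1) \<noteq> 1"
    then have "c \<noteq> length rho - 1" using c by metis
    then have "bs ! (length rho - 1) < bs ! c" using assms(4) c by blast
    moreover have "length rho - 1 < length rho" using assms(3) by simp
    ultimately have "rho ! (length rho - 1) < rho ! c" using assms(2) c unfolding iso_def by blast
    moreover have "rho ! (length rho - 1) \<in> {1..length rho}" using assms(1,3) unfolding is_perm_def
      by (metis diff_less nth_mem less_numeral_extra(1) order_less_le_trans)
    ultimately show False using c by auto
  qed
qed

definition disj :: "nat set list \<Rightarrow> bool" where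
  "disj Bs \<longleftrightarrow> (\<forall>i<length Bs. \<forall>j<length Bs. i \<noteq> j \<longrightarrow> Bs ! i \<inter> Bs ! j = {})"

lemma disj_Nil[simp]: "disj []" by (simp add: disj_def)

lemma disj_Cons: "disj (C # Cs) \<longleftrightarrow> (\<forall>B\<in>set Cs. C \<inter> B = {}) \<and> disj Cs"
proof
  assume d: "disj (C # Cs)"
  have "\<forall>B\<in>set Cs. C \<inter> B = {}"
  proof
    fix B assume "B \<in> set Cs"
    then obtain j where "j < length Cs" "Cs ! j = B" by (metis in_set_conv_nth)
    moreover have "(C#Cs)!0 \<inter> (C#Cs)!(Suc j) = {}" using d \<open>j < length Cs\<close> unfolding disj_def
      by (metis Suc_less_eq length_Cons nat.distinct(1) zero_less_Suc)
    ultimately show "C \<inter> B = {}" by simp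
  qed
  moreover have "disj Cs" unfolding disj_def
  proof (intro allI impI)
    fix i j assume ij: "i < length Cs" "j < length Cs" "i \<noteq> j"
    have "(C#Cs)!Suc i \<inter> (C#Cs)!Suc j = {}" using d ij unfolding disj_def
      by (metis (no_types) Suc_inject Suc_less_eq length_Cons)
    then show "Cs ! i \<inter> Cs ! j = {}" by simp
  qed
  ultimately show "(\<forall>B\<in>set Cs. C \<inter> B = {}) \<and> disj Cs" by blast
next
  assume a: "(\<forall>B\<in>set Cs. C \<inter> B = {}) \<and> disj Cs"
  show "disj (C # Cs)" unfolding disj_def
  proof (intro allI impI)
    fix i j assume ij: "i < length (C # Cs)" "j < length (C # Cs)" "i \<noteq> j"
    show "(C # Cs) ! i \<inter> (C # Cs) ! j = {}"
    proof (cases i)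
      case 0
      then obtain j' where "j = Suc j'" using ij by (cases j) auto
      then show ?thesis using a ij 0 by auto
    next
      case (Suc i')
      show ?thesis
      proof (cases j)
        case 0 then show ?thesis using a ij Suc by auto
      next
        case (Suc j') then show ?thesis using a ij \<open>i = Suc i'\<close> unfolding disj_def by auto
      qed
    qed
  qed
qed

lemma disj_snoc: "disj (Cs @ [C]) \<longleftrightarrow> (\<forall>B\<in>set Cs. C \<inter> B = {}) \<and> disj Cs"
  by (induction Cs) (auto simp: disj_Cons)

lemma disj_map_mono: "(\<And>B. f B \<subseteq> B) \<Longrightarrow> disj Bs \<Longrightarrow> disj (map f Bs)"
proof (induction Bs)
  case Nil then show ?case by simp
next
  case (Cons a Bs)
  then have "disj (map f Bs)" "\<forall>B\<in>set Bs. a \<inter> B = {}" by (auto simp: disj_Cons)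
  then show ?case using Cons.prems(1) unfolding list.map disj_Cons by fastforce
qed

lemma disj_replicate: "disj (replicate j {})" by (simp add: disj_def)

lemma disj_map_image: "inj f \<Longrightarrow> disj (map (image f) Bs) \<longleftrightarrow> disj Bs"
  by (induction Bs) (auto simp: disj_Cons image_Int[symmetric])

lemma disj_filter: "disj Bs \<Longrightarrow> disj (filter P Bs)"
  by (induction Bs) (auto simp: disj_Cons)

definition wparts :: "nat \<Rightarrow> nat \<Rightarrow> nat set list set" where
  "wparts n k = {Bs. length Bs = k \<and> disj Bs \<and> \<Union>(set Bs) = {1..n}}"

lemma op_eq: "ordered_partitions n k = {Bs \<in> wparts n k. \<forall>B\<in>set Bs. B \<noteq> {}}"
  unfolding ordered_partitions_def wparts_def disj_def by auto

lemma finite_wparts: "finite (wparts n k)"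
proof -
  have "wparts n k \<subseteq> {Bs. set Bs \<subseteq> Pow {1..n} \<and> length Bs = k}"
    unfolding wparts_def by auto
  moreover have "finite {Bs. set Bs \<subseteq> Pow {1..n} \<and> length Bs = k}"
    by (rule finite_lists_length_eq) auto
  ultimately show ?thesis by (rule finite_subset)
qed

lemma finite_op: "finite (ordered_partitions n k)"
  using finite_wparts op_eq by simp

definition Tc :: "nat \<Rightarrow> nat list \<Rightarrow> nat \<Rightarrow> nat" where
  "Tc k rho n = card {Bs \<in> wparts n k. \<not> op_contains Bs rho}"

lemma op_le_T: "op_count n k rho \<le> Tc k rho n"
  unfolding op_count_def Tc_def op_eq
  by (rule card_mono) (auto intro: finite_subset[OF _ finite_wparts])

lemma T_pos:
  assumes "k \<ge> 1" "length rho \<ge> 2"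
  shows "Tc k rho n \<ge> 1"
proof -
  let ?B = "{1..n} # replicate (k - 1) {}"
  have "?B \<in> wparts n k" unfolding wparts_def using assms
    by (auto simp: disj_Cons disj_replicate)
  moreover have "\<not> op_contains ?B rho"
  proof
    assume "op_contains ?B rho"
    then obtain bs where "iso bs rho" "emb bs ?B" using op_contains_emb by blast
    then have "length bs \<ge> 2" using assms unfolding iso_def by simp
    then obtain b1 r where r: "bs = b1 # r" by (cases bs) auto
    with \<open>length bs \<ge> 2\<close> obtain b2 bs' where "r = b2 # bs'" by (cases r) auto
    with r have "bs = b1 # b2 # bs'" by simp
    then show False using \<open>emb bs ?B\<close> emb_replicate_empty by auto
  qed
  ultimately have "{Bs \<in> wparts n k. \<not> op_contains Bs rho} \<noteq> {}" by blast
  then show ?thesis unfolding Tc_def using finite_wparts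
    by (simp add: Suc_leI card_gt_0_iff)
qed

lemma emb_map_sub: "(\<And>B. f B \<subseteq> B) \<Longrightarrow> emb bs (map f Bs) \<Longrightarrow> emb bs Bs"
proof (induction Bs arbitrary: bs)
  case Nil then show ?case by (cases bs) auto
next
  case (Cons B Bs)
  then show ?case by (cases bs) auto
qed

lemma disj_map_image_on: "inj_on f (\<Union>(set Bs)) \<Longrightarrow> disj Bs \<Longrightarrow> disj (map (image f) Bs)"
proof (induction Bs)
  case Nil then show ?case by simp
next
  case (Cons C Bs)
  have i: "inj_on f (\<Union>(set Bs))" using Cons.prems(1) by (auto intro: inj_on_subset)
  have "\<forall>B\<in>set Bs. f ` C \<inter> f ` B = {}"
  proof
    fix B assume "B \<in> set Bs"
    then have "C \<inter> B = {}" using Cons.prems(2) by (simp add: disj_Cons)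
    moreover have "C \<union> B \<subseteq> \<Union>(set (C # Bs))" using \<open>B \<in> set Bs\<close> by auto
    ultimately show "f ` C \<inter> f ` B = {}" using Cons.prems(1)
      by (metis image_empty inj_on_image_Int le_sup_iff)
  qed
  then show ?case using Cons i by (auto simp: disj_Cons)
qed

definition r1 :: "nat \<Rightarrow> nat set list \<Rightarrow> nat set list" where
  "r1 n Bs = map (\<lambda>B. B \<inter> {..n}) Bs"
definition r2 :: "nat \<Rightarrow> nat set list \<Rightarrow> nat set list" where
  "r2 n Bs = map (image (\<lambda>x. x - n)) (map (\<lambda>B. B \<inter> {n<..}) Bs)"

lemma Union_map_inter: "\<Union>(set (map (\<lambda>B. B \<inter> A) Bs)) = \<Union>(set Bs) \<inter> A"
  by auto

lemma r1_wparts: "Bs \<in> wparts (n + m) k \<Longrightarrow> r1 n Bs \<in> wparts n k"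
  unfolding wparts_def r1_def
  by (auto intro: disj_map_mono)

lemma img_shift: "(\<lambda>x. x - n) ` ({1..n + m} \<inter> {n<..}) = {1..(m::nat)}"
proof
  show "{1..m} \<subseteq> (\<lambda>x. x - n) ` ({1..n + m} \<inter> {n<..})"
  proof
    fix x assume "x \<in> {1..m}"
    then have "x + n \<in> {1..n + m} \<inter> {n<..}" "x = (x + n) - n" by auto
    then show "x \<in> (\<lambda>x. x - n) ` ({1..n + m} \<inter> {n<..})" by blast
  qed
qed auto

lemma r2_wparts: "Bs \<in> wparts (n + m) k \<Longrightarrow> r2 n Bs \<in> wparts m k"
proof -
  assume a: "Bs \<in> wparts (n + m) k"
  have "disj (map (\<lambda>B. B \<inter> {n<..}) Bs)" using a unfolding wparts_def by (auto intro: disj_map_mono)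
  moreover have "inj_on (\<lambda>x. x - n) (\<Union>(set (map (\<lambda>B. B \<inter> {n<..}) Bs)))"
    by (auto simp: inj_on_def)
  ultimately have "disj (r2 n Bs)" unfolding r2_def by (rule disj_map_image_on[rotated])
  moreover have "\<Union>(set (r2 n Bs)) = {1..m}"
  proof -
    have u: "\<Union>(set Bs) = {1..n+m}" using a unfolding wparts_def by simp
    have "\<Union>(set (r2 n Bs)) = (\<lambda>x. x - n) ` (\<Union>(set Bs) \<inter> {n<..})"
      unfolding r2_def by auto
    then show ?thesis using u img_shift by simp
  qed
  ultimately show ?thesis using a unfolding wparts_def r2_def by auto
qed

lemma r1_avoid: "op_contains (r1 n Bs) rho \<Longrightarrow> op_contains Bs rho"
  unfolding op_contains_emb r1_def using emb_map_sub[of "\<lambda>B. B \<inter> {..n}"] by blast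

lemma r2_avoid: "op_contains (r2 n Bs) rho \<Longrightarrow> op_contains Bs rho"
proof -
  assume "op_contains (r2 n Bs) rho"
  then obtain bs where b: "iso bs rho" "emb bs (r2 n Bs)" unfolding op_contains_emb by blast
  then obtain bs' where b': "bs = map (\<lambda>x. x - n) bs'" "emb bs' (map (\<lambda>B. B \<inter> {n<..}) Bs)"
    unfolding r2_def using emb_image by blast
  have s: "set bs' \<subseteq> {n<..}" using emb_set[OF b'(2)] by auto
  have "strict_mono_on {n<..} (\<lambda>x. x - n)" by (auto simp: strict_mono_on_def)
  then have "iso bs' rho" using iso_map[OF _ s] b b' by metis
  moreover have "emb bs' Bs" using emb_map_sub[OF _ b'(2)] by blast
  ultimately show ?thesis unfolding op_contains_emb by blast
qed

lemma r_inj: "inj_on (\<lambda>Bs. (r1 n Bs, r2 n Bs)) (wparts N k)"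
proof (rule inj_onI)
  fix Bs Cs assume B: "Bs \<in> wparts N k" "Cs \<in> wparts N k" and eq: "(r1 n Bs, r2 n Bs) = (r1 n Cs, r2 n Cs)"
  have len: "length Bs = k" "length Cs = k" using B unfolding wparts_def by auto
  show "Bs = Cs"
  proof (rule nth_equalityI)
    show "length Bs = length Cs" using len by simp
  next
    fix i assume i: "i < length Bs"
    have e1: "Bs ! i \<inter> {..n} = Cs ! i \<inter> {..n}"
      using arg_cong[OF eq, of "\<lambda>p. fst p ! i"] i len unfolding r1_def by simp
    have "(\<lambda>x. x - n) ` (Bs ! i \<inter> {n<..}) = (\<lambda>x. x - n) ` (Cs ! i \<inter> {n<..})"
      using arg_cong[OF eq, of "\<lambda>p. snd p ! i"] i len unfolding r2_def by simp
    moreover have "inj_on (\<lambda>x. x - n) {n<..}" by (auto simp: inj_on_def)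
    ultimately have e2: "Bs ! i \<inter> {n<..} = Cs ! i \<inter> {n<..}"
      by (simp add: inj_on_image_eq_iff)
    have "Bs ! i = (Bs ! i \<inter> {..n}) \<union> (Bs ! i \<inter> {n<..})" by auto
    also have "\<dots> = (Cs ! i \<inter> {..n}) \<union> (Cs ! i \<inter> {n<..})" using e1 e2 by simp
    also have "\<dots> = Cs ! i" by auto
    finally show "Bs ! i = Cs ! i" .
  qed
qed

lemma T_submult: "Tc k rho (n + m) \<le> Tc k rho n * Tc k rho m"
proof -
  let ?A = "\<lambda>N. {Bs \<in> wparts N k. \<not> op_contains Bs rho}"
  have "inj_on (\<lambda>Bs. (r1 n Bs, r2 n Bs)) (?A (n + m))"
    using r_inj by (rule inj_on_subset) auto
  moreover have "(\<lambda>Bs. (r1 n Bs, r2 n Bs)) ` ?A (n + m) \<subseteq> ?A n \<times> ?A m"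
    using r1_wparts r2_wparts r1_avoid r2_avoid by blast
  moreover have "finite (?A n \<times> ?A m)" using finite_wparts by auto
  ultimately have "card (?A (n + m)) \<le> card (?A n \<times> ?A m)" by (rule card_inj_on_le)
  then show ?thesis unfolding Tc_def card_cartesian_product .
qed

lemma Union_Suc: "{1} \<union> Suc ` {1..n} = {1..Suc n}"
proof
  show "{1..Suc n} \<subseteq> {1} \<union> Suc ` {1..n}"
  proof
    fix x assume "x \<in> {1..Suc n}"
    show "x \<in> {1} \<union> Suc ` {1..n}"
    proof (cases "x = 1")
      case True then show ?thesis by simp
    next
      case False
      then have "x - 1 \<in> {1..n}" "x = Suc (x - 1)" using \<open>x \<in> {1..Suc n}\<close> by auto
      then show ?thesis by (metis image_eqI UnI2)
    qed
  qed
qed auto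

lemma perm_last_ne:
  assumes "is_perm rho" "length rho \<ge> 2" "rho ! 0 = 1"
  shows "rho ! (length rho - 1) \<noteq> 1"
proof
  assume "rho ! (length rho - 1) = 1"
  then have "rho ! 0 = rho ! (length rho - 1)" using assms by simp
  moreover have "distinct rho" using assms unfolding is_perm_def by simp
  moreover have "length rho - 1 < length rho" "0 < length rho" using assms(2) by auto
  ultimately have "0 = length rho - 1" using nth_eq_iff_index_eq by blast
  then show False using assms by simp
qed

definition ext :: "nat list \<Rightarrow> nat set list \<Rightarrow> nat set list" where
  "ext rho Bs = (if rho ! 0 \<noteq> 1 then {1} # map (image Suc) Bs else map (image Suc) Bs @ [{1}])"

lemma inj_imSuc: "inj (image Suc)" by (simp add: inj_def inj_image_eq_iff)

lemma ext_inj: "inj (ext rho)"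
  unfolding ext_def by (rule injI) (auto split: if_splits simp: inj_map_eq_map[OF inj_imSuc])

lemma set_Suc_gt1: "Bs \<in> ordered_partitions n j \<Longrightarrow> \<Union>(set (map (image Suc) Bs)) = Suc ` {1..n}"
proof -
  assume "Bs \<in> ordered_partitions n j"
  then have "\<Union>(set Bs) = {1..n}" unfolding ordered_partitions_def by auto
  moreover have "\<Union>(set (map (image Suc) Bs)) = Suc ` \<Union>(set Bs)" by auto
  ultimately show ?thesis by simp
qed

lemma ext_op: "Bs \<in> ordered_partitions n j \<Longrightarrow> ext rho Bs \<in> ordered_partitions (Suc n) (Suc j)"
proof -
  assume a: "Bs \<in> ordered_partitions n j"
  then have w: "length Bs = j" "disj Bs" "\<Union>(set Bs) = {1..n}" "\<forall>B\<in>set Bs. B \<noteq> {}"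
    unfolding op_eq wparts_def by auto
  have d: "disj (map (image Suc) Bs)" using w disj_map_image[of Suc] by simp
  have "\<forall>B\<in>set Bs. 0 \<notin> B"
  proof (intro ballI notI)
    fix B assume "B \<in> set Bs" "0 \<in> B"
    then have "0 \<in> \<Union>(set Bs)" by blast
    then show False using w(3) by simp
  qed
  then have nm: "\<forall>B\<in>set (map (image Suc) Bs). {1} \<inter> B = {}" by auto
  have u: "\<Union>(set (map (image Suc) Bs)) = Suc ` {1..n}" using set_Suc_gt1[OF a] .
  show ?thesis unfolding op_eq wparts_def ext_def
    using w d nm u Union_Suc[of n] by (auto simp: disj_Cons disj_snoc)
qed

lemma ext_avoid:
  assumes rho: "is_perm rho" "length rho \<ge> 2"
    and a: "Bs \<in> ordered_partitions n j" "\<not> op_contains Bs rho"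
  shows "\<not> op_contains (ext rho Bs) rho"
proof
  assume "op_contains (ext rho Bs) rho"
  then obtain bs where b: "iso bs rho" "emb bs (ext rho Bs)" unfolding op_contains_emb by blast
  have u: "\<Union>(set (map (image Suc) Bs)) = Suc ` {1..n}" using set_Suc_gt1[OF a(1)] .
  have lb: "length bs = length rho" using b unfolding iso_def by simp
  have main: "emb bs (map (image Suc) Bs) \<Longrightarrow> False"
  proof -
    assume "emb bs (map (image Suc) Bs)"
    then obtain bs' where "bs = map Suc bs'" "emb bs' Bs" using emb_image by blast
    moreover have "strict_mono_on UNIV Suc" by (simp add: strict_mono_on_def)
    ultimately have "iso bs' rho" "emb bs' Bs" using b iso_map[of UNIV Suc bs' rho] by auto
    then show False using a(2) unfolding op_contains_emb by blast
  qed
  show False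
  proof (cases "rho ! 0 \<noteq> 1")
    case True
    then have e: "emb bs ({1} # map (image Suc) Bs)" using b unfolding ext_def by simp
    obtain b0 bs' where bs: "bs = b0 # bs'" using lb rho by (cases bs) auto
    show False
    proof (cases "b0 \<in> {1} \<and> emb bs' (map (image Suc) Bs)")
      case True
      then have "set bs' \<subseteq> Suc ` {1..n}" using emb_set u by blast
      have "\<forall>c<length rho. c \<noteq> 0 \<longrightarrow> bs ! 0 < bs ! c"
      proof (intro allI impI)
        fix c assume c: "c < length rho" "c \<noteq> 0"
        then have "c - 1 < length bs'" using bs lb by auto
        then have "bs' ! (c - 1) \<in> Suc ` {1..n}" using \<open>set bs' \<subseteq> Suc ` {1..n}\<close> nth_mem by blast
        moreover have "bs ! c = bs' ! (c - 1)" "bs ! 0 = 1" using bs c True by (auto simp: nth_Cons')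
        ultimately show "bs ! 0 < bs ! c" by auto
      qed
      then have "rho ! 0 = 1" using iso_first[OF rho(1) b(1)] rho by simp
      then show False using \<open>rho ! 0 \<noteq> 1\<close> by simp
    next
      case False
      then show False using e bs main by auto
    qed
  next
    case False
    then have r0: "rho ! 0 = 1" by simp
    then have e: "emb bs (map (image Suc) Bs @ [{1}])" using b unfolding ext_def by simp
    from emb_snoc[OF e] show False
    proof
      assume "emb bs (map (image Suc) Bs)" then show False by (rule main)
    next
      assume "\<exists>bs' b. bs = bs' @ [b] \<and> b \<in> {1} \<and> emb bs' (map (image Suc) Bs)"
      then obtain bs' where bs: "bs = bs' @ [1]" "emb bs' (map (image Suc) Bs)" by blast
      then have "set bs' \<subseteq> Suc ` {1..n}" using emb_set u by blast
      moreover have "length bs' = length rho - 1" using bs lb by simp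
      ultimately have "\<forall>c<length rho. c \<noteq> length rho - 1 \<longrightarrow> bs ! (length rho - 1) < bs ! c"
      proof (intro allI impI)
        fix c assume c: "c < length rho" "c \<noteq> length rho - 1"
        then have "c < length bs'" using \<open>length bs' = length rho - 1\<close> by auto
        then have "bs' ! c \<in> Suc ` {1..n}" using \<open>set bs' \<subseteq> Suc ` {1..n}\<close> nth_mem by blast
        moreover have "bs ! c = bs' ! c" "bs ! (length rho - 1) = 1"
          using bs \<open>c < length bs'\<close> \<open>length bs' = length rho - 1\<close> by (auto simp: nth_append)
        ultimately show "bs ! (length rho - 1) < bs ! c" by auto
      qed
      then have "rho ! (length rho - 1) = 1" using iso_last[OF rho(1) b(1)] rho by simp
      then show False using perm_last_ne[OF rho r0] by simp
    qed
  qed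
qed

lemma step1:
  assumes "is_perm rho" "length rho \<ge> 2"
  shows "op_count n j rho \<le> op_count (Suc n) (Suc j) rho"
  unfolding op_count_def
proof (rule card_inj_on_le[of "ext rho"])
  show "inj_on (ext rho) {Bs \<in> ordered_partitions n j. \<not> op_contains Bs rho}"
    using ext_inj by (auto intro: inj_on_subset)
  show "ext rho ` {Bs \<in> ordered_partitions n j. \<not> op_contains Bs rho}
        \<subseteq> {Bs \<in> ordered_partitions (Suc n) (Suc j). \<not> op_contains Bs rho}"
    using ext_op ext_avoid[OF assms] by blast
  show "finite {Bs \<in> ordered_partitions (Suc n) (Suc j). \<not> op_contains Bs rho}"
    using finite_op by simp
qed

definition gB :: "nat set \<Rightarrow> nat set" where
  "gB B = Suc ` B \<union> (if 1 \<in> B then {1} else {})"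

definition h12 :: "nat \<Rightarrow> nat" where "h12 x = (if x = 1 then 2 else x)"

lemma gB_12: "x \<in> gB B \<Longrightarrow> x \<in> {1,2} \<Longrightarrow> 0 \<notin> B \<Longrightarrow> 1 \<in> B"
  unfolding gB_def by (auto split: if_splits)

lemma emb_g:
  "\<forall>B\<in>set Bs. 0 \<notin> B \<Longrightarrow> emb bs (map gB Bs) \<Longrightarrow> emb (map h12 bs) (map (image Suc) Bs)"
proof (induction Bs arbitrary: bs)
  case Nil then show ?case by (cases bs) auto
next
  case (Cons B Bs)
  show ?case
  proof (cases bs)
    case Nil then show ?thesis by simp
  next
    case (Cons b bs')
    show ?thesis
    proof (cases "b \<in> gB B \<and> emb bs' (map gB Bs)")
      case True
      have "h12 b \<in> Suc ` B"
      proof (cases "b = 1")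
        case True
        then have "1 \<in> B" using gB_12[of b B] \<open>b \<in> gB B \<and> _\<close> Cons.prems by auto
        then show ?thesis using True unfolding h12_def by force
      next
        case False
        then show ?thesis using \<open>b \<in> gB B \<and> _\<close> unfolding h12_def gB_def by (auto split: if_splits)
      qed
      then show ?thesis using True Cons.IH[of bs'] Cons.prems \<open>bs = b # bs'\<close> by auto
    next
      case False
      then have "emb bs (map gB Bs)" using Cons.prems \<open>bs = b # bs'\<close> by auto
      then have "emb (map h12 bs) (map (image Suc) Bs)" using Cons.IH Cons.prems by auto
      then show ?thesis using \<open>bs = b # bs'\<close> by simp
    qed
  qed
qed

lemma emb_g12:
  "disj Bs \<Longrightarrow> \<forall>B\<in>set Bs. 0 \<notin> B \<Longrightarrow> emb bs (map gB Bs) \<Longrightarrow> \<not> (1 \<in> set bs \<and> 2 \<in> set bs)"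
proof (induction Bs arbitrary: bs)
  case Nil then show ?case by (cases bs) auto
next
  case (Cons B Bs)
  have dB: "\<forall>B'\<in>set Bs. B \<inter> B' = {}" "disj Bs" using Cons.prems(1) by (auto simp: disj_Cons)
  have z: "\<forall>B\<in>set Bs. 0 \<notin> B" "0 \<notin> B" using Cons.prems(2) by auto
  show ?case
  proof (cases bs)
    case Nil then show ?thesis by simp
  next
    case (Cons b bs')
    show ?thesis
    proof (cases "b \<in> gB B \<and> emb bs' (map gB Bs)")
      case True
      have ih: "\<not> (1 \<in> set bs' \<and> 2 \<in> set bs')" using Cons.IH[OF dB(2) z(1)] True by blast
      have sub: "set bs' \<subseteq> \<Union>(set (map gB Bs))" using emb_set True by blast
      have oth: "x \<in> set bs' \<Longrightarrow> x \<in> {1,2} \<Longrightarrow> \<exists>B'\<in>set Bs. 1 \<in> B'" for x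
      proof -
        assume x: "x \<in> set bs'" "x \<in> {1,2}"
        then obtain B' where "B' \<in> set Bs" "x \<in> gB B'" using sub by auto
        then show ?thesis using gB_12 z(1) x(2) by blast
      qed
      show ?thesis
      proof
        assume both: "1 \<in> set bs \<and> 2 \<in> set bs"
        show False
        proof (cases "b \<in> {1,2}")
          case True
          then have "1 \<in> B" using gB_12 \<open>b \<in> gB B \<and> _\<close> z(2) by blast
          moreover have "\<exists>x. x \<in> set bs' \<and> x \<in> {1,2}" using both True \<open>bs = b # bs'\<close> by auto
          ultimately show False using oth dB(1) by blast
        next
          case False
          then show False using both ih \<open>bs = b # bs'\<close> by auto
        qed
      qed
    next
      case False
      then have "emb bs (map gB Bs)" using Cons.prems \<open>bs = b # bs'\<close> by auto
      then show ?thesis using Cons.IH[OF dB(2) z(1)] by blast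
    qed
  qed
qed

lemma h12_mono: "\<not> (1 \<in> A \<and> 2 \<in> A) \<Longrightarrow> strict_mono_on A h12"
  unfolding strict_mono_on_def
proof (intro allI impI)
  fix r s assume a0: "\<not> (1 \<in> A \<and> 2 \<in> A)" and a1: "r \<in> A \<and> s \<in> A \<and> r < s"
  then have a: "\<not> (1 \<in> A \<and> 2 \<in> A)" "r \<in> A" "s \<in> A" "r < s" by auto
  show "h12 r < h12 s"
  proof (cases "r = 1")
    case True
    then have "s \<noteq> 2" using a by auto
    then show ?thesis using True a(4) unfolding h12_def by auto
  next
    case False
    then show ?thesis using a(4) unfolding h12_def by auto
  qed
qed

lemma gB_alt: "gB X = Suc ` X \<union> {x. x = 1 \<and> 1 \<in> X}"
  unfolding gB_def by auto

lemma gB_op: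
  assumes "Bs \<in> ordered_partitions n k" "n \<ge> 1"
  shows "map gB Bs \<in> ordered_partitions (Suc n) k"
proof -
  have w: "length Bs = k" "disj Bs" "\<Union>(set Bs) = {1..n}" "\<forall>B\<in>set Bs. B \<noteq> {}"
    using assms unfolding op_eq wparts_def by auto
  have z: "\<forall>B\<in>set Bs. 0 \<notin> B"
  proof (intro ballI notI)
    fix B assume "B \<in> set Bs" "0 \<in> B"
    then have "0 \<in> \<Union>(set Bs)" by blast
    then show False using w(3) by simp
  qed
  have d: "disj (map gB Bs)" using w(2) z
  proof (induction Bs)
    case Nil then show ?case by simp
  next
    case (Cons C Cs)
    have "\<forall>B\<in>set Cs. gB C \<inter> gB B = {}"
    proof
      fix B assume "B \<in> set Cs"
      then have "C \<inter> B = {}" "0 \<notin> B" "0 \<notin> C" using Cons.prems by (auto simp: disj_Cons)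
      moreover have "1 \<notin> Suc ` B" "1 \<notin> Suc ` C" using \<open>0 \<notin> B\<close> \<open>0 \<notin> C\<close> by auto
      moreover have "Suc ` C \<inter> Suc ` B = {}" using \<open>C \<inter> B = {}\<close> by (metis image_Int image_empty inj_Suc)
      moreover have "\<not> (1 \<in> C \<and> 1 \<in> B)" using \<open>C \<inter> B = {}\<close> by blast
      ultimately show "gB C \<inter> gB B = {}" unfolding gB_alt by auto
    qed
    moreover have "disj (map gB Cs)" using Cons.IH Cons.prems by (simp add: disj_Cons)
    ultimately show ?case by (simp add: disj_Cons)
  qed
  have "\<Union>(set (map gB Bs)) = {1} \<union> Suc ` {1..n}"
  proof
    show "\<Union>(set (map gB Bs)) \<subseteq> {1} \<union> Suc ` {1..n}"
    proof
      fix x assume "x \<in> \<Union>(set (map gB Bs))"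
      then obtain B where B: "B \<in> set Bs" "x \<in> gB B" by auto
      then have "B \<subseteq> {1..n}" using w(3) by (metis Union_upper)
      then have "Suc ` B \<subseteq> Suc ` {1..n}" by (rule image_mono)
      then show "x \<in> {1} \<union> Suc ` {1..n}" using B(2) unfolding gB_alt by blast
    qed
    have "1 \<in> \<Union>(set Bs)" using w(3) assms(2) by simp
    then obtain B1 where "B1 \<in> set Bs" "1 \<in> B1" by blast
    then have "1 \<in> gB B1" unfolding gB_alt by blast
    then have "1 \<in> \<Union>(set (map gB Bs))" using \<open>B1 \<in> set Bs\<close> by auto
    moreover have "Suc ` {1..n} \<subseteq> \<Union>(set (map gB Bs))"
    proof
      fix x assume "x \<in> Suc ` {1..n}"
      then obtain y where y: "x = Suc y" "y \<in> {1..n}" by blast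
      then have "y \<in> \<Union>(set Bs)" using w(3) by simp
      then obtain B where "y \<in> B" "B \<in> set Bs" by blast
      then have "x \<in> gB B" using y unfolding gB_alt by blast
      then show "x \<in> \<Union>(set (map gB Bs))" using \<open>B \<in> set Bs\<close> by auto
    qed
    ultimately show "{1} \<union> Suc ` {1..n} \<subseteq> \<Union>(set (map gB Bs))" by blast
  qed
  then have "\<Union>(set (map gB Bs)) = {1..Suc n}" using Union_Suc by metis
  moreover have "\<forall>B\<in>set (map gB Bs). B \<noteq> {}" using w(4) unfolding gB_alt by auto
  ultimately show ?thesis using w d unfolding op_eq wparts_def by auto
qed

lemma gB_avoid:
  assumes "Bs \<in> ordered_partitions n k" "\<not> op_contains Bs rho"
  shows "\<not> op_contains (map gB Bs) rho"
proof
  assume "op_contains (map gB Bs) rho"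
  then obtain bs where b: "iso bs rho" "emb bs (map gB Bs)" unfolding op_contains_emb by blast
  have w: "disj Bs" "\<Union>(set Bs) = {1..n}"
    using assms unfolding op_eq wparts_def by auto
  have z: "\<forall>B\<in>set Bs. 0 \<notin> B"
  proof (intro ballI notI)
    fix B assume "B \<in> set Bs" "0 \<in> B"
    then have "0 \<in> \<Union>(set Bs)" by blast
    then show False using w(2) by simp
  qed
  have n12: "\<not> (1 \<in> set bs \<and> 2 \<in> set bs)" using emb_g12[OF w(1) z b(2)] .
  have "iso (map h12 bs) rho" using iso_map[OF h12_mono[OF n12] order_refl, of rho] b(1) by simp
  have "emb (map h12 bs) (map (image Suc) Bs)" using emb_g[OF z b(2)] .
  then obtain bs' where bs': "map h12 bs = map Suc bs'" "emb bs' Bs" using emb_image by blast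
  have sm: "strict_mono_on UNIV Suc" by (simp add: strict_mono_on_def)
  have "iso (map Suc bs') rho" using \<open>iso (map h12 bs) rho\<close> bs'(1) by simp
  then have "iso bs' rho" using iso_map[OF sm, of bs' rho] by simp
  then show False using bs' assms(2) unfolding op_contains_emb by blast
qed

lemma gB_inj: "inj_on (map gB) (ordered_partitions n k)"
proof (rule inj_onI)
  fix Bs Cs assume a: "Bs \<in> ordered_partitions n k" "Cs \<in> ordered_partitions n k" "map gB Bs = map gB Cs"
  have l: "length Bs = k" "length Cs = k" "\<Union>(set Bs) = {1..n}" "\<Union>(set Cs) = {1..n}"
    using a unfolding ordered_partitions_def by auto
  have key: "0 \<notin> B \<Longrightarrow> gB B - {1} = Suc ` B" for B unfolding gB_def by auto
  show "Bs = Cs"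
  proof (rule nth_equalityI)
    show "length Bs = length Cs" using l by simp
  next
    fix i assume i: "i < length Bs"
    have "gB (Bs ! i) = gB (Cs ! i)" using arg_cong[OF a(3), of "\<lambda>xs. xs ! i"] i l by simp
    moreover have "Bs ! i \<subseteq> {1..n}" using l(3) nth_mem[OF i] by (metis Union_upper)
    moreover have "i < length Cs" using i l by simp
    then have "Cs ! i \<subseteq> {1..n}" using l(4) nth_mem by (metis Union_upper)
    ultimately have "Suc ` (Bs ! i) = Suc ` (Cs ! i)"
    proof -
      assume a: "gB (Bs ! i) = gB (Cs ! i)" "Bs ! i \<subseteq> {1..n}" "Cs ! i \<subseteq> {1..n}"
      have "0 \<notin> Bs ! i" "0 \<notin> Cs ! i" using a(2,3) by auto
      then have "gB (Bs ! i) - {1} = Suc ` (Bs ! i)" "gB (Cs ! i) - {1} = Suc ` (Cs ! i)"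
        using key by blast+
      then show ?thesis using a(1) by simp
    qed
    then show "Bs ! i = Cs ! i" by (simp add: inj_image_eq_iff)
  qed
qed

lemma step2:
  assumes "n \<ge> 1"
  shows "op_count n k rho \<le> op_count (Suc n) k rho"
  unfolding op_count_def
proof (rule card_inj_on_le[of "map gB"])
  show "inj_on (map gB) {Bs \<in> ordered_partitions n k. \<not> op_contains Bs rho}"
    using gB_inj by (rule inj_on_subset) auto
  show "map gB ` {Bs \<in> ordered_partitions n k. \<not> op_contains Bs rho}
        \<subseteq> {Bs \<in> ordered_partitions (Suc n) k. \<not> op_contains Bs rho}"
    using gB_op[OF _ assms] gB_avoid by blast
  show "finite {Bs \<in> ordered_partitions (Suc n) k. \<not> op_contains Bs rho}"
    using finite_op by simp
qed

lemma filter_supp_inj: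
  "length xs = length ys \<Longrightarrow> filter (\<lambda>B. B \<noteq> {}) xs = filter (\<lambda>B. B \<noteq> {}) ys \<Longrightarrow>
   (\<forall>i<length xs. xs ! i = {} \<longleftrightarrow> ys ! i = {}) \<Longrightarrow> xs = (ys :: 'a set list)"
proof (induction xs ys rule: list_induct2)
  case Nil then show ?case by simp
next
  case (Cons x xs y ys)
  have e: "x = {} \<longleftrightarrow> y = {}" using Cons.prems(2) by (drule_tac x=0 in spec) simp
  have t: "\<forall>i<length xs. xs ! i = {} \<longleftrightarrow> ys ! i = {}"
    using Cons.prems(2) by (auto dest: spec[of _ "Suc _"])
  show ?case
  proof (cases "x = {}")
    case True
    then show ?thesis using e Cons.prems(1) Cons.IH t by simp
  next
    case False
    then show ?thesis using e Cons.prems(1) Cons.IH t by simp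
  qed
qed

lemma T_le_sum: "Tc k rho N \<le> 2 ^ k * (\<Sum>j\<le>k. op_count N j rho)"
proof -
  let ?A = "{Bs \<in> wparts N k. \<not> op_contains Bs rho}"
  let ?U = "\<Union>j\<in>{..k}. {Cs \<in> ordered_partitions N j. \<not> op_contains Cs rho}"
  let ?f = "\<lambda>Bs. (filter (\<lambda>B. B \<noteq> {}) Bs, {i. i < k \<and> Bs ! i \<noteq> {}})"
  have "inj_on ?f ?A"
  proof (rule inj_onI)
    fix Bs Cs assume a: "Bs \<in> ?A" "Cs \<in> ?A" "?f Bs = ?f Cs"
    have l: "length Bs = k" "length Cs = k" using a unfolding wparts_def by auto
    have "\<forall>i<length Bs. Bs ! i = {} \<longleftrightarrow> Cs ! i = {}"
    proof (intro allI impI)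
      fix i assume "i < length Bs"
      moreover have "{i. i < k \<and> Bs ! i \<noteq> {}} = {i. i < k \<and> Cs ! i \<noteq> {}}" using a(3) by simp
      ultimately show "Bs ! i = {} \<longleftrightarrow> Cs ! i = {}" using l by blast
    qed
    then show "Bs = Cs" using filter_supp_inj[of Bs Cs] l a(3) by simp
  qed
  moreover have "?f ` ?A \<subseteq> ?U \<times> Pow {..<k}"
  proof
    fix p assume "p \<in> ?f ` ?A"
    then obtain Bs where B: "Bs \<in> ?A" "p = ?f Bs" by blast
    let ?F = "filter (\<lambda>B. B \<noteq> {}) Bs"
    have w: "length Bs = k" "disj Bs" "\<Union>(set Bs) = {1..N}" using B unfolding wparts_def by auto
    have "\<Union>(set ?F) = {1..N}" using w(3) by auto
    then have "?F \<in> ordered_partitions N (length ?F)"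
      unfolding op_eq wparts_def using disj_filter[OF w(2)] by auto
    moreover have "\<not> op_contains ?F rho" using B(1) emb_filter unfolding op_contains_emb by blast
    moreover have "length ?F \<le> k" using w(1) length_filter_le by metis
    ultimately have "?F \<in> ?U" by blast
    then show "p \<in> ?U \<times> Pow {..<k}" using B(2) by auto
  qed
  moreover have "finite (?U \<times> Pow {..<k})" using finite_op by auto
  ultimately have "card ?A \<le> card (?U \<times> Pow {..<k})" by (rule card_inj_on_le)
  also have "\<dots> = card ?U * 2 ^ k" by (simp add: card_cartesian_product card_Pow)
  also have "card ?U \<le> (\<Sum>j\<le>k. op_count N j rho)"
    unfolding op_count_def by (rule card_UN_le) simp
  finally show ?thesis unfolding Tc_def by (simp add: mult.commute)
qed

lemma iter1:
  assumes "is_perm rho" "length rho \<ge> 2"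
  shows "op_count N j rho \<le> op_count (N + d) (j + d) rho"
proof (induction d)
  case 0 then show ?case by simp
next
  case (Suc d)
  then show ?case using step1[OF assms, of "N + d" "j + d"] by simp
qed

lemma iter2:
  assumes "N \<ge> 1"
  shows "op_count N k rho \<le> op_count (N + d) k rho"
proof (induction d)
  case 0 then show ?case by simp
next
  case (Suc d)
  then show ?case using step2[of "N + d" k rho] assms by simp
qed

lemma op0: "N \<ge> 1 \<Longrightarrow> op_count N 0 rho = 0"
  unfolding op_count_def ordered_partitions_def by auto

lemma T_le:
  assumes "is_perm rho" "length rho \<ge> 2" "N \<ge> 1"
  shows "Tc k rho N \<le> 2 ^ k * ((k + 1) * op_count (N + k) k rho)"
proof -
  have "\<And>j. j \<in> {..k} \<Longrightarrow> op_count N j rho \<le> op_count (N + k) k rho"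
  proof -
    fix j assume j: "j \<in> {..k}"
    show "op_count N j rho \<le> op_count (N + k) k rho"
    proof (cases "j = 0")
      case True then show ?thesis using op0 assms(3) by simp
    next
      case False
      have "op_count N j rho \<le> op_count (N + (k - j)) (j + (k - j)) rho" by (rule iter1[OF assms(1,2)])
      also have "j + (k - j) = k" using j by simp
      also have "op_count (N + (k - j)) k rho \<le> op_count (N + (k - j) + j) k rho"
        by (rule iter2) (use assms(3) in simp)
      also have "N + (k - j) + j = N + k" using j by simp
      finally show ?thesis .
    qed
  qed
  then have "(\<Sum>j\<le>k. op_count N j rho) \<le> (\<Sum>j\<le>k. op_count (N + k) k rho)" by (rule sum_mono)
  then have "(\<Sum>j\<le>k. op_count N j rho) \<le> (k + 1) * op_count (N + k) k rho" by simp
  then show ?thesis using T_le_sum[of k rho N] by (meson le_trans mult_le_mono2)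
qed

lemma subadd_iter:
  fixes u :: "nat \<Rightarrow> real"
  assumes sub: "\<And>m n. u (m + n) \<le> u m + u n"
  shows "u (a * q + r) \<le> real a * u q + u r"
proof (induction a)
  case 0 then show ?case by simp
next
  case (Suc a)
  have "u (Suc a * q + r) = u (q + (a * q + r))" by (simp add: algebra_simps)
  also have "\<dots> \<le> u q + u (a * q + r)" by (rule sub)
  also have "\<dots> \<le> u q + (real a * u q + u r)" using Suc by simp
  finally show ?case by (simp add: algebra_simps)
qed

lemma fekete:
  fixes u :: "nat \<Rightarrow> real"
  assumes sub: "\<And>m n. u (m + n) \<le> u m + u n" and nn: "\<And>n. u n \<ge> 0"
  shows "(\<lambda>n. u n / real n) \<longlonglongrightarrow> (INF n\<in>{1..}. u n / real n)"
proof -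
  define L where "L = (INF n\<in>{1..}. u n / real n)"
  have bdd: "bdd_below ((\<lambda>n. u n / real n) ` {1..})"
    by (rule bdd_belowI[of _ 0]) (use nn in auto)
  have low: "L \<le> u n / real n" if "n \<ge> 1" for n
    unfolding L_def using bdd that by (intro cINF_lower) auto
  show ?thesis unfolding L_def[symmetric]
  proof (rule LIMSEQ_I)
    fix r :: real assume r: "r > 0"
    have "L < L + r / 2" using r by simp
    then obtain q where q: "q \<in> {1..}" "u q / real q < L + r / 2"
      using cINF_less_iff[OF _ bdd, of "L + r / 2"] unfolding L_def by auto
    define M where "M = (\<Sum>i<q. u i)"
    have M0: "M \<ge> 0" unfolding M_def using nn by (simp add: sum_nonneg)
    obtain N :: nat where N: "real N > 2 * M / r" using reals_Archimedean2 by blast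
    show "\<exists>no. \<forall>n\<ge>no. norm (u n / real n - L) < r"
    proof (intro exI allI impI)
      fix n assume n: "n \<ge> max 1 (Suc N)"
      then have n1: "n \<ge> 1" and nN: "real n > 2 * M / r" using N by auto
      have q1: "q \<ge> 1" using q by auto
      have "u n = u ((n div q) * q + n mod q)" by simp
      also have "\<dots> \<le> real (n div q) * u q + u (n mod q)" by (rule subadd_iter[OF sub])
      also have "u (n mod q) \<le> M" unfolding M_def
        using nn q1 by (intro member_le_sum) auto
      finally have un: "u n \<le> real (n div q) * u q + M" by simp
      have "(n div q) * q \<le> n" by (metis div_mult_mod_eq le_add1)
      then have "real (n div q) * real q \<le> real n"
        by (metis of_nat_le_iff of_nat_mult)
      then have "real (n div q) \<le> real n / real q" using q1 by (simp add: field_simps)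
      then have "real (n div q) * u q \<le> real n / real q * u q" using nn[of q] by (rule mult_right_mono)
      with un have "u n / real n \<le> (real n / real q * u q + M) / real n"
        using n1 by (simp add: divide_right_mono)
      also have "\<dots> = u q / real q + M / real n" using n1 q1 by (simp add: field_simps)
      also have "M / real n < r / 2"
      proof -
        have "M < real n * r / 2" using nN r by (simp add: field_simps)
        then show ?thesis using n1 by (simp add: field_simps)
      qed
      finally have "u n / real n < u q / real q + r / 2" by simp
      then have "u n / real n < L + r" using q by simp
      moreover have "L \<le> u n / real n" using low n1 by simp
      ultimately show "norm (u n / real n - L) < r" by simp
    qed
  qed
qed

lemma lim_const_shift: "(\<lambda>m. c / real (m + s)) \<longlonglongrightarrow> (0::real)"
proof -
  have "(\<lambda>n. c / real n) \<longlonglongrightarrow> 0" by (rule lim_const_over_n)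
  then show ?thesis using LIMSEQ_ignore_initial_segment[of "\<lambda>n. c / real n" 0 s] by simp
qed

theorem theorem11:
  fixes k :: nat and rho :: "nat list"
  assumes "k \<ge> 1" and "is_perm rho" and "length rho \<ge> 2"
  shows "\<exists>L::real. L \<ge> 1 \<and> (\<lambda>n. root n (real (op_count n k rho))) \<longlonglongrightarrow> L"
proof -
  define T where "T n = real (Tc k rho n)" for n
  define S where "S n = real (op_count n k rho)" for n
  define u where "u n = ln (T n)" for n
  define C :: real where "C = 2 ^ k * (real k + 1)"
  have T1: "T n \<ge> 1" for n unfolding T_def using T_pos[OF assms(1,3)] by simp
  have Tp: "T n > 0" for n using T1[of n] by linarith
  have sub: "u (m + n) \<le> u m + u n" for m n
  proof -
    have "T (m + n) \<le> T m * T n" unfolding T_def using T_submult[of k rho m n]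
      by (metis of_nat_le_iff of_nat_mult)
    moreover have "T (m + n) > 0" "T m > 0" "T n > 0" using T1 by (auto intro: less_le_trans[OF zero_less_one])
    ultimately have "ln (T (m + n)) \<le> ln (T m * T n)" by (subst ln_le_cancel_iff) auto
    then show ?thesis unfolding u_def using \<open>T m > 0\<close> \<open>T n > 0\<close> by (simp add: ln_mult)
  qed
  have nn: "u n \<ge> 0" for n unfolding u_def using T1 by simp
  define lam where "lam = (INF n\<in>{1..}. u n / real n)"
  have fk: "(\<lambda>n. u n / real n) \<longlonglongrightarrow> lam" unfolding lam_def by (rule fekete[OF sub nn])
  have lam0: "lam \<ge> 0"
    by (rule LIMSEQ_le_const[OF fk]) (use nn in auto)
  have C1: "C \<ge> 1"
  proof -
    have a: "(1::real) \<le> 2 ^ k" by (rule one_le_power) simp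
    have b: "(1::real) \<le> real k + 1" by simp
    show ?thesis using mult_mono[OF a b] unfolding C_def by simp
  qed
  have SleT: "S n \<le> T n" for n unfolding S_def T_def using op_le_T by simp
  have TleS: "T (m + 1) \<le> C * S (m + 1 + k)" for m
  proof -
    have "Tc k rho (m + 1) \<le> 2 ^ k * ((k + 1) * op_count (m + 1 + k) k rho)"
      using T_le[OF assms(2,3), of "m + 1" k] by simp
    then have "real (Tc k rho (m + 1)) \<le> real (2 ^ k * ((k + 1) * op_count (m + 1 + k) k rho))"
      by (rule of_nat_mono)
    then show ?thesis unfolding T_def S_def C_def by (simp add: algebra_simps)
  qed
  have Spos: "S (m + 1 + k) > 0" for m
  proof -
    have "1 \<le> C * S (m + 1 + k)" using T1[of "m+1"] TleS[of m] by simp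
    then show ?thesis using C1 unfolding S_def
      by (metis mult_zero_right not_one_le_zero of_nat_0_le_iff order_le_less)
  qed
  define g where "g n = ln (S n) / real n" for n
  let ?lo = "\<lambda>m. (u (m + 1) / real (m + 1)) * (real (m + 1) / real (m + (k + 1))) - ln C / real (m + (k + 1))"
  let ?hi = "\<lambda>m. u (m + (k + 1)) / real (m + (k + 1))"
  have lo_lim: "?lo \<longlonglongrightarrow> lam * 1 - 0"
  proof (intro tendsto_diff tendsto_mult)
    show "(\<lambda>m. u (m + 1) / real (m + 1)) \<longlonglongrightarrow> lam"
      using LIMSEQ_ignore_initial_segment[OF fk, of 1] by simp
    have "(\<lambda>m. 1 - real k / real (m + (k + 1))) \<longlonglongrightarrow> 1 - 0"
      by (intro tendsto_diff tendsto_const lim_const_shift)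
    moreover have "real (m + 1) / real (m + (k + 1)) = 1 - real k / real (m + (k + 1))" for m
      by (simp add: field_simps)
    ultimately show "(\<lambda>m. real (m + 1) / real (m + (k + 1))) \<longlonglongrightarrow> 1" by simp
    show "(\<lambda>m. ln C / real (m + (k + 1))) \<longlonglongrightarrow> 0" by (rule lim_const_shift)
  qed
  have hi_lim: "?hi \<longlonglongrightarrow> lam" using LIMSEQ_ignore_initial_segment[OF fk, of "k+1"] by simp
  have glim: "(\<lambda>m. g (m + (k + 1))) \<longlonglongrightarrow> lam"
  proof (rule tendsto_sandwich[of ?lo _ _ ?hi])
    show "?lo \<longlonglongrightarrow> lam" using lo_lim by simp
    show "?hi \<longlonglongrightarrow> lam" by (rule hi_lim)
    show "\<forall>\<^sub>F m in sequentially. ?lo m \<le> g (m + (k + 1))"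
    proof (intro always_eventually allI)
      fix m
      have sp: "S (m + (k + 1)) > 0" using Spos[of m] by (simp add: add.assoc add.commute)
      have b0: "real (m + 1) \<noteq> 0" by simp
      have "u (m + 1) / real (m + 1) * (real (m + 1) / real (m + (k + 1))) = u (m + 1) / real (m + (k + 1))"
        using b0 by simp
      then have "?lo m = (u (m + 1) - ln C) / real (m + (k + 1))"
        by (simp add: diff_divide_distrib)
      also have "u (m + 1) - ln C \<le> ln (S (m + (k + 1)))"
      proof -
        have "T (m + 1) \<le> C * S (m + (k + 1))" using TleS[of m] by (simp add: add.assoc add.commute)
        then have "ln (T (m + 1)) \<le> ln (C * S (m + (k + 1)))"
          using Tp C1 sp by (subst ln_le_cancel_iff) auto
        also have "\<dots> = ln C + ln (S (m + (k + 1)))" using C1 sp by (simp add: ln_mult)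
        finally show ?thesis unfolding u_def by simp
      qed
      then have "(u (m + 1) - ln C) / real (m + (k + 1)) \<le> ln (S (m + (k + 1))) / real (m + (k + 1))"
        by (rule divide_right_mono) simp
      finally show "?lo m \<le> g (m + (k + 1))" unfolding g_def .
    qed
    show "\<forall>\<^sub>F m in sequentially. g (m + (k + 1)) \<le> ?hi m"
    proof (intro always_eventually allI)
      fix m
      have sp: "S (m + (k + 1)) > 0" using Spos[of m] by (simp add: add.assoc add.commute)
      have "ln (S (m + (k + 1))) \<le> u (m + (k + 1))" unfolding u_def
        using SleT sp Tp by (subst ln_le_cancel_iff) auto
      then show "g (m + (k + 1)) \<le> ?hi m" unfolding g_def by (rule divide_right_mono) simp
    qed
  qed
  then have "g \<longlonglongrightarrow> lam" by (rule LIMSEQ_offset)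
  then have "(\<lambda>n. exp (g n)) \<longlonglongrightarrow> exp lam" by (rule tendsto_exp)
  moreover have "\<forall>\<^sub>F n in sequentially. exp (g n) = root n (real (op_count n k rho))"
  proof (rule eventually_sequentiallyI[of "k + 1"])
    fix n assume n: "n \<ge> k + 1"
    then obtain m where m: "n = m + (k + 1)" by (metis add.commute le_add_diff_inverse)
    have sp: "S n > 0" using Spos[of m] m by (simp add: add.assoc add.commute)
    have n0: "n > 0" using n by simp
    have "root n (S n) = S n powr (1 / real n)" using root_powr_inverse[OF n0 less_imp_le[OF sp]] by simp
    also have "\<dots> = exp (g n)" unfolding g_def using sp by (simp add: powr_def)
    finally show "exp (g n) = root n (real (op_count n k rho))" unfolding S_def by simp
  qed
  ultimately have "(\<lambda>n. root n (real (op_count n k rho))) \<longlonglongrightarrow> exp lam"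
    by (rule Lim_transform_eventually)
  moreover have "exp lam \<ge> 1" using lam0 by simp
  ultimately show ?thesis by blast
qed

end
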